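(* Let $P$ be a rooted tree poset with $n$ elements. Then $\deg(\partial)\ge n$, with equality if and only if $P$ is a rooted star poset.
   Context: Labelings of $P$ are bijections $P\to[n]$; $\Lambda(P)$ is the set of labelings. Promotion $\partial:\Lambda(P)\to\Lambda(P)$: for non-maximal $x$, the $L$-successor of $x$ is the element greater than $x$ with minimal label; the promotion chain is $v_1=L^{-1}(1)$, $v_{i+1}$ the $L$-successor of $v_i$, ending at the first maximal $v_m$; $\partial(L)(x)=L(x)-1$ off the chain, $\partial(L)(v_i)=L(v_{i+1})-1$ for $i<m$, $\partial(L)(v_m)=n$. A rooted tree poset is a connected poset in which each element is covered by at most one element. A rooted star poset is a rooted tree poset whose root covers every other element. $\deg(f)=\frac{1}{|X|}\sum_{x\in X}|f^{-1}(x)|^2$ for $f:X\to X$, here with $X=\Lambda(P)$. *)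

theory Defs
  imports Complex_Main
begin

definition lt :: "('a \<Rightarrow> 'a \<Rightarrow> bool) \<Rightarrow> 'a \<Rightarrow> 'a \<Rightarrow> bool" where
  "lt le x y \<longleftrightarrow> le x y \<and> x \<noteq> y"

definition finite_poset :: "'a set \<Rightarrow> ('a \<Rightarrow> 'a \<Rightarrow> bool) \<Rightarrow> bool" where
  "finite_poset P le \<longleftrightarrow> finite P \<and>
     (\<forall>x\<in>P. le x x) \<and>
     (\<forall>x\<in>P. \<forall>y\<in>P. le x y \<and> le y x \<longrightarrow> x = y) \<and>
     (\<forall>x\<in>P. \<forall>y\<in>P. \<forall>z\<in>P. le x y \<and> le y z \<longrightarrow> le x z)"

definition covers :: "'a set \<Rightarrow> ('a \<Rightarrow> 'a \<Rightarrow> bool) \<Rightarrow> 'a \<Rightarrow> 'a \<Rightarrow> bool" where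
  "covers P le x y \<longleftrightarrow> x \<in> P \<and> y \<in> P \<and> lt le x y \<and>
     \<not> (\<exists>z\<in>P. lt le x z \<and> lt le z y)"

definition is_maximal :: "'a set \<Rightarrow> ('a \<Rightarrow> 'a \<Rightarrow> bool) \<Rightarrow> 'a \<Rightarrow> bool" where
  "is_maximal P le x \<longleftrightarrow> x \<in> P \<and> \<not> (\<exists>y\<in>P. lt le x y)"

definition poset_connected :: "'a set \<Rightarrow> ('a \<Rightarrow> 'a \<Rightarrow> bool) \<Rightarrow> bool" where
  "poset_connected P le \<longleftrightarrow> P \<noteq> {} \<and>
     (\<forall>x\<in>P. \<forall>y\<in>P. (x, y) \<in> ({(a, b). a \<in> P \<and> b \<in> P \<and> (le a b \<or> le b a)})\<^sup>*)"

definition rooted_tree_poset :: "'a set \<Rightarrow> ('a \<Rightarrow> 'a \<Rightarrow> bool) \<Rightarrow> bool" where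
  "rooted_tree_poset P le \<longleftrightarrow> finite_poset P le \<and> poset_connected P le \<and>
     (\<forall>x\<in>P. \<forall>y\<in>P. \<forall>z\<in>P. covers P le x y \<and> covers P le x z \<longrightarrow> y = z)"

definition rooted_star_poset :: "'a set \<Rightarrow> ('a \<Rightarrow> 'a \<Rightarrow> bool) \<Rightarrow> bool" where
  "rooted_star_poset P le \<longleftrightarrow> rooted_tree_poset P le \<and>
     (\<exists>r\<in>P. \<forall>x\<in>P. x \<noteq> r \<longrightarrow> covers P le x r)"

definition labelings :: "'a set \<Rightarrow> ('a \<Rightarrow> nat) set" where
  "labelings P = {L. bij_betw L P {1..card P} \<and> (\<forall>x. x \<notin> P \<longrightarrow> L x = 0)}"

definition lsucc :: "'a set \<Rightarrow> ('a \<Rightarrow> 'a \<Rightarrow> bool) \<Rightarrow> ('a \<Rightarrow> nat) \<Rightarrow> 'a \<Rightarrow> 'a" where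
  "lsucc P le L x = (ARG_MIN L y. y \<in> P \<and> lt le x y)"

definition chain_elt :: "'a set \<Rightarrow> ('a \<Rightarrow> 'a \<Rightarrow> bool) \<Rightarrow> ('a \<Rightarrow> nat) \<Rightarrow> nat \<Rightarrow> 'a" where
  "chain_elt P le L i = (lsucc P le L ^^ i) (inv_into P L 1)"

definition chain_end :: "'a set \<Rightarrow> ('a \<Rightarrow> 'a \<Rightarrow> bool) \<Rightarrow> ('a \<Rightarrow> nat) \<Rightarrow> nat" where
  "chain_end P le L = (LEAST i. is_maximal P le (chain_elt P le L i))"

definition promotion_chain :: "'a set \<Rightarrow> ('a \<Rightarrow> 'a \<Rightarrow> bool) \<Rightarrow> ('a \<Rightarrow> nat) \<Rightarrow> 'a set" where
  "promotion_chain P le L = chain_elt P le L ` {0..chain_end P le L}"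

definition promotion :: "'a set \<Rightarrow> ('a \<Rightarrow> 'a \<Rightarrow> bool) \<Rightarrow> ('a \<Rightarrow> nat) \<Rightarrow> ('a \<Rightarrow> nat)" where
  "promotion P le L = (\<lambda>x.
     if x \<notin> P then 0
     else if x = chain_elt P le L (chain_end P le L) then card P
     else if x \<in> promotion_chain P le L then L (lsucc P le L x) - 1
     else L x - 1)"

definition deg :: "'b set \<Rightarrow> ('b \<Rightarrow> 'b) \<Rightarrow> real" where
  "deg X f = (1 / real (card X)) * (\<Sum>x\<in>X. real (card {y\<in>X. f y = x}) ^ 2)"

end

theory Submission
  imports Defs
begin


lemma fp_facts:
  assumes "finite_poset P le"
  shows "finite P" "\<And>x. x \<in> P \<Longrightarrow> le x x"
    "\<And>x y. x \<in> P \<Longrightarrow> y \<in> P \<Longrightarrow> le x y \<Longrightarrow> le y x \<Longrightarrow> x = y"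
    "\<And>x y z. x \<in> P \<Longrightarrow> y \<in> P \<Longrightarrow> z \<in> P \<Longrightarrow> le x y \<Longrightarrow> le y z \<Longrightarrow> le x z"
  using assms unfolding finite_poset_def by blast+

lemma mk_bij: "finite A \<Longrightarrow> inj_on f A \<Longrightarrow> f ` A \<subseteq> {1..card A} \<Longrightarrow> bij_betw f A {1..card (A::'a set)}"
  unfolding bij_betw_def by (simp add: card_image card_subset_eq)

locale rtp =
  fixes P :: "'a set" and le :: "'a \<Rightarrow> 'a \<Rightarrow> bool" and r :: 'a
  assumes fp: "finite_poset P le" and rP: "r \<in> P" and root: "\<And>x. x \<in> P \<Longrightarrow> le x r"
begin

lemmas F = fp_facts[OF fp]

lemma lt_trans: "x\<in>P \<Longrightarrow> y\<in>P \<Longrightarrow> z\<in>P \<Longrightarrow> lt le x y \<Longrightarrow> lt le y z \<Longrightarrow> lt le x z"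
  unfolding lt_def using F(3) F(4) by blast

lemma lt_asym: "x\<in>P \<Longrightarrow> y\<in>P \<Longrightarrow> lt le x y \<Longrightarrow> lt le y x \<Longrightarrow> False"
  unfolding lt_def using F(3) by blast

lemma max_iff: "is_maximal P le x \<longleftrightarrow> x = r"
  unfolding is_maximal_def lt_def using rP root F(3) by blast

lemma lt_r: "x \<in> P \<Longrightarrow> x \<noteq> r \<Longrightarrow> lt le x r" using root by (simp add: lt_def)

lemma cardP: "card P \<ge> 1" using rP F(1) by (simp add: Suc_le_eq card_gt_0_iff) blast

lemma lab: assumes "L \<in> labelings P" shows "inj_on L P" "L ` P = {1..card P}" "\<And>x. x\<notin>P \<Longrightarrow> L x = 0"
  using assms by (auto simp: labelings_def bij_betw_def)

lemma lab_range: "L \<in> labelings P \<Longrightarrow> x \<in> P \<Longrightarrow> 1 \<le> L x \<and> L x \<le> card P"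
  using lab(2)[of L] by (metis atLeastAtMost_iff imageI)

lemma lsucc_in: assumes "x\<in>P" "\<not> is_maximal P le x"
  shows "lsucc P le L x \<in> P \<and> lt le x (lsucc P le L x)"
proof -
  obtain y where "y \<in> P" "lt le x y" using assms by (auto simp: is_maximal_def)
  then show ?thesis unfolding lsucc_def by (rule arg_min_natI[of "\<lambda>y. y \<in> P \<and> lt le x y" y L, OF conjI])
qed

lemma lsucc_eq: assumes "inj_on L P" "y\<in>P" "lt le x y" "\<And>z. z\<in>P \<Longrightarrow> lt le x z \<Longrightarrow> L y \<le> L z"
  shows "lsucc P le L x = y"
proof -
  have 1: "lsucc P le L x \<in> P \<and> lt le x (lsucc P le L x)" unfolding lsucc_def
    by (rule arg_min_natI[of "\<lambda>y. y \<in> P \<and> lt le x y" y L]) (use assms in auto)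
  have 2: "L (lsucc P le L x) \<le> L y" unfolding lsucc_def
    by (rule arg_min_nat_le) (use assms in auto)
  have "L y \<le> L (lsucc P le L x)" using assms(4) 1 by auto
  then have "L (lsucc P le L x) = L y" using 2 by simp
  then show ?thesis using assms(1,2) 1 by (auto dest: inj_onD)
qed

lemma c_Suc: "chain_elt P le L (Suc i) = lsucc P le L (chain_elt P le L i)"
  by (simp add: chain_elt_def)

lemma c0: assumes "L \<in> labelings P" shows "chain_elt P le L 0 \<in> P \<and> L (chain_elt P le L 0) = 1"
proof -
  have "1 \<in> L ` P" using lab(2)[OF assms] cardP by auto
  then show ?thesis by (simp add: chain_elt_def inv_into_into f_inv_into_f)
qed

lemma chain_mono:
  assumes L: "L \<in> labelings P"
  shows "(\<And>i. i<k \<Longrightarrow> \<not> is_maximal P le (chain_elt P le L i)) \<Longrightarrow>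
    (\<forall>i\<le>k. chain_elt P le L i \<in> P) \<and>
    (\<forall>i j. i < j \<longrightarrow> j \<le> k \<longrightarrow> lt le (chain_elt P le L i) (chain_elt P le L j))"
proof (induction k)
  case 0 then show ?case using c0[OF L] by auto
next
  case (Suc k)
  let ?c = "chain_elt P le L"
  have IH: "(\<forall>i\<le>k. ?c i \<in> P) \<and> (\<forall>i j. i < j \<longrightarrow> j \<le> k \<longrightarrow> lt le (?c i) (?c j))"
    using Suc.IH Suc.prems by auto
  have ck: "?c k \<in> P" "\<not> is_maximal P le (?c k)" using IH Suc.prems by auto
  have new: "?c (Suc k) \<in> P \<and> lt le (?c k) (?c (Suc k))" using lsucc_in[OF ck] by (simp add: c_Suc)
  have A: "\<forall>i\<le>Suc k. ?c i \<in> P" using IH new le_Suc_eq by auto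
  have B: "lt le (?c i) (?c j)" if "i < j" "j \<le> Suc k" for i j
  proof (cases "j = Suc k")
    case False then show ?thesis using IH that by auto
  next
    case True
    show ?thesis
    proof (cases "i = k")
      case True then show ?thesis using new \<open>j = Suc k\<close> by simp
    next
      case False
      then have "i < k" using that \<open>j = Suc k\<close> by simp
      then have "lt le (?c i) (?c k)" using IH by auto
      then show ?thesis using lt_trans[of "?c i" "?c k" "?c (Suc k)"] new IH \<open>i<k\<close> \<open>j = Suc k\<close> ck by auto
    qed
  qed
  show ?case using A B by blast
qed

lemma end_ex: assumes L: "L \<in> labelings P" shows "\<exists>i. is_maximal P le (chain_elt P le L i)"
proof (rule ccontr)
  let ?c = "chain_elt P le L"
  assume "\<not> ?thesis"
  then have H: "(\<forall>i\<le>card P. ?c i \<in> P) \<and> (\<forall>i j. i<j \<longrightarrow> j \<le> card P \<longrightarrow> lt le (?c i) (?c j))"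
    using chain_mono[OF L, of "card P"] by blast
  have "inj_on ?c {0..card P}"
  proof (rule inj_onI)
    fix i j assume "i \<in> {0..card P}" "j \<in> {0..card P}" "?c i = ?c j"
    then show "i = j" using H by (metis atLeastAtMost_iff linorder_neqE_nat lt_def)
  qed
  moreover have "?c ` {0..card P} \<subseteq> P" using H by auto
  ultimately have "card {0..card P} \<le> card P" using F(1) by (rule card_inj_on_le)
  then show False by simp
qed

lemma end_facts:
  assumes L: "L \<in> labelings P"
  defines "m \<equiv> chain_end P le L"
  shows "chain_elt P le L m = r" "\<And>i. i < m \<Longrightarrow> \<not> is_maximal P le (chain_elt P le L i)"
    "\<And>i. i \<le> m \<Longrightarrow> chain_elt P le L i \<in> P"
    "\<And>i j. i < j \<Longrightarrow> j \<le> m \<Longrightarrow> lt le (chain_elt P le L i) (chain_elt P le L j)"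
proof -
  let ?c = "chain_elt P le L"
  have "is_maximal P le (?c m)" unfolding m_def chain_end_def using end_ex[OF L] by (rule LeastI_ex)
  then show "?c m = r" by (simp add: max_iff)
  show nm: "\<And>i. i < m \<Longrightarrow> \<not> is_maximal P le (?c i)" unfolding m_def chain_end_def by (rule not_less_Least)
  have "(\<forall>i\<le>m. ?c i \<in> P) \<and> (\<forall>i j. i < j \<longrightarrow> j \<le> m \<longrightarrow> lt le (?c i) (?c j))"
    using chain_mono[OF L, of m] nm by blast
  then show "\<And>i. i \<le> m \<Longrightarrow> ?c i \<in> P" "\<And>i j. i < j \<Longrightarrow> j \<le> m \<Longrightarrow> lt le (?c i) (?c j)" by auto
qed

lemma chain_inj:
  assumes L: "L \<in> labelings P" and "i \<le> chain_end P le L" "j \<le> chain_end P le L"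
    "chain_elt P le L i = chain_elt P le L j"
  shows "i = j"
  using end_facts(4)[OF L] assms(2-4) by (metis linorder_neqE_nat lt_def)

lemma prom_in:
  assumes L: "L \<in> labelings P"
  shows "promotion P le L \<in> labelings P \<and> promotion P le L r = card P"
proof -
  let ?c = "chain_elt P le L"
  let ?m = "chain_end P le L"
  let ?f = "promotion P le L"
  let ?C = "promotion_chain P le L"
  define g where "g x = (if x \<in> ?C then lsucc P le L x else x)" for x
  have C: "?C = ?c ` {0..?m}" by (simp add: promotion_chain_def)
  have cm: "?c ?m = r" by (rule end_facts(1)[OF L])
  have fr: "?f r = card P" using rP cm by (simp add: promotion_def)
  have fx: "?f x = L (g x) - 1" if "x \<in> P" "x \<noteq> r" for x
    using that cm by (simp add: promotion_def g_def)
  have c0: "?c 0 \<in> P" "L (?c 0) = 1" using c0[OF L] by auto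
  have gC: "\<exists>i<?m. x = ?c i \<and> g x = ?c (Suc i)" if "x \<in> P" "x \<noteq> r" "x \<in> ?C" for x
  proof -
    obtain i where i: "i \<le> ?m" "x = ?c i" using \<open>x \<in> ?C\<close> C by auto
    then have "i \<noteq> ?m" using cm that by auto
    then have "i < ?m" using i by simp
    then show ?thesis using i that by (auto simp: g_def c_Suc)
  qed
  have g: "g x \<in> P \<and> g x \<noteq> ?c 0" if xPr: "x \<in> P" "x \<noteq> r" for x
  proof (cases "x \<in> ?C")
    case True
    then obtain i where i: "i < ?m" "x = ?c i" "g x = ?c (Suc i)" using gC[OF xPr True] by blast
    have "lt le (?c 0) (?c (Suc i))" using end_facts(4)[OF L, of 0 "Suc i"] i by simp
    then show ?thesis using i end_facts(3)[OF L, of "Suc i"] by (auto simp: lt_def)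
  next
    case False
    then have "?c 0 \<in> ?C" using C by auto
    then show ?thesis using False that by (auto simp: g_def)
  qed
  have Lg: "2 \<le> L (g x) \<and> L (g x) \<le> card P" if "x \<in> P" "x \<noteq> r" for x
  proof -
    have "L (g x) \<noteq> 1" using g[OF that] c0 lab(1)[OF L] by (metis inj_onD)
    then show ?thesis using lab_range[OF L, of "g x"] g[OF that] by auto
  qed
  have inj: "inj_on ?f P"
  proof (rule inj_onI)
    fix x y assume xy: "x \<in> P" "y \<in> P" "?f x = ?f y"
    show "x = y"
    proof (cases "x = r \<or> y = r")
      case True
      have fl: "?f z < card P" if "z \<in> P" "z \<noteq> r" for z
      proof -
        have "2 \<le> L (g z)" "L (g z) \<le> card P" using Lg[OF that] by auto
        then show ?thesis unfolding fx[OF that] by arith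
      qed
      show ?thesis
      proof (cases "x = r")
        case True
        then show ?thesis using fl[of y] xy fr by (cases "y = r") auto
      next
        case False
        then show ?thesis using fl[of x] xy fr \<open>x = r \<or> y = r\<close> by auto
      qed
    next
      case False
      have e: "L (g x) - 1 = L (g y) - 1" using xy(3) fx[OF xy(1)] fx[OF xy(2)] False by simp
      have "2 \<le> L (g x)" "2 \<le> L (g y)" using Lg xy False by auto
      then have "L (g x) = L (g y)" using e by arith
      then have gg: "g x = g y" using lab(1)[OF L] g xy False by (meson inj_onD)
      show ?thesis
      proof (cases "x \<in> ?C"; cases "y \<in> ?C")
        assume "x \<in> ?C" "y \<in> ?C"
        then obtain i j where "i < ?m" "x = ?c i" "g x = ?c (Suc i)" "j < ?m" "y = ?c j" "g y = ?c (Suc j)"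
          using gC xy False by meson
        then show ?thesis using chain_inj[OF L, of "Suc i" "Suc j"] gg by auto
      next
        assume "x \<in> ?C" "y \<notin> ?C"
        then obtain i where i: "i < ?m" "x = ?c i" "g x = ?c (Suc i)" using gC xy False by meson
        have "?c (Suc i) \<in> ?C" unfolding C using i(1) by (intro imageI) simp
        moreover have "g y = y" using \<open>y \<notin> ?C\<close> by (simp add: g_def)
        ultimately have "y \<in> ?C" using gg i by simp
        then show ?thesis using \<open>y \<notin> ?C\<close> by simp
      next
        assume "x \<notin> ?C" "y \<in> ?C"
        then obtain i where i: "i < ?m" "y = ?c i" "g y = ?c (Suc i)" using gC xy False by meson
        have "?c (Suc i) \<in> ?C" unfolding C using i(1) by (intro imageI) simp
        moreover have "g x = x" using \<open>x \<notin> ?C\<close> by (simp add: g_def)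
        ultimately have "x \<in> ?C" using gg i by simp
        then show ?thesis using \<open>x \<notin> ?C\<close> by simp
      next
        assume "x \<notin> ?C" "y \<notin> ?C"
        then show ?thesis using gg by (simp add: g_def)
      qed
    qed
  qed
  have im: "?f ` P \<subseteq> {1..card P}"
  proof
    fix v assume "v \<in> ?f ` P"
    then obtain x where x: "x \<in> P" "v = ?f x" by auto
    show "v \<in> {1..card P}"
    proof (cases "x = r")
      case True then show ?thesis using x fr cardP by simp
    next
      case False then show ?thesis using x fx Lg by fastforce
    qed
  qed
  have "bij_betw ?f P {1..card P}" using mk_bij[OF F(1) inj im] .
  moreover have "\<forall>x. x \<notin> P \<longrightarrow> ?f x = 0" by (simp add: promotion_def)
  ultimately show ?thesis using fr by (simp add: labelings_def)
qed

end


lemma fp_subset: "finite_poset P le \<Longrightarrow> Q \<subseteq> P \<Longrightarrow> finite_poset Q le"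
  unfolding finite_poset_def by (blast intro: finite_subset)

lemma linext:
  "finite_poset P le \<Longrightarrow> \<exists>M. bij_betw M P {1..card P} \<and> (\<forall>x\<in>P. \<forall>y\<in>P. lt le x y \<longrightarrow> M x < M y)"
proof (induction "card P" arbitrary: P)
  case 0
  then have "P = {}" by (simp add: finite_poset_def)
  then show ?case by (auto simp: bij_betw_def)
next
  case (Suc k)
  note F = fp_facts[OF Suc.prems]
  have fin: "finite P" by (rule F(1))
  then have "P \<noteq> {}" using Suc.hyps by auto
  then obtain x0 where "x0 \<in> P" by auto
  obtain m where m: "m \<in> P" and mmin: "\<forall>y. y \<in> P \<longrightarrow> card {z\<in>P. le m z} \<le> card {z\<in>P. le y z}"
    using ex_has_least_nat[of "\<lambda>y. y \<in> P" x0 "\<lambda>y. card {z\<in>P. le y z}"] \<open>x0\<in>P\<close> by auto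
  have mmax: "\<not> lt le m y" if "y \<in> P" for y
  proof
    assume "lt le m y"
    then have my: "le m y" "m \<noteq> y" by (auto simp: lt_def)
    have "{z\<in>P. le y z} \<subset> {z\<in>P. le m z}"
    proof
      show "{z\<in>P. le y z} \<subseteq> {z\<in>P. le m z}" using F(4) m that my by blast
      show "{z\<in>P. le y z} \<noteq> {z\<in>P. le m z}" using F(2)[OF m] F(3)[OF m that] my m by blast
    qed
    then have "card {z\<in>P. le y z} < card {z\<in>P. le m z}" using fin by (intro psubset_card_mono) auto
    then show False using mmin that by fastforce
  qed
  define P' where "P' = P - {m}"
  have fp': "finite_poset P' le" using Suc.prems fp_subset[of P le P'] by (auto simp: P'_def)
  have cP': "card P' = k" using Suc.hyps m fin by (simp add: P'_def)
  obtain M' where bij': "bij_betw M' P' {1..k}" and mono': "\<forall>x\<in>P'. \<forall>y\<in>P'. lt le x y \<longrightarrow> M' x < M' y"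
    using Suc.hyps(1)[OF cP'[symmetric] fp'] cP' by auto
  define M where "M x = (if x = m then Suc k else M' x)" for x
  have Pi: "P = insert m P'" using m by (auto simp: P'_def)
  have im1: "M ` P' = M' ` P'" by (auto simp: M_def P'_def)
  have im2: "M' ` P' = {1..k}" using bij' by (simp add: bij_betw_def)
  have inj1: "inj_on M P' = inj_on M' P'" by (rule inj_on_cong) (auto simp: M_def P'_def)
  have mP': "m \<notin> P'" by (simp add: P'_def)
  have "M m \<notin> M ` P'" using im1 im2 by (simp add: M_def)
  then have "inj_on M (insert m P')" using inj1 bij' mP' by (simp add: bij_betw_def)
  moreover have "M m = Suc k" by (simp add: M_def)
  then have "M ` (insert m P') = insert (Suc k) {1..k}" using im1 im2 by simp
  ultimately have "bij_betw M (insert m P') (insert (Suc k) {1..k})" by (simp add: bij_betw_def)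
  moreover have "insert (Suc k) {1..k} = {1..Suc k}" by auto
  ultimately have "bij_betw M P {1..card P}" using Pi Suc.hyps(2) by simp
  moreover have "\<forall>x\<in>P. \<forall>y\<in>P. lt le x y \<longrightarrow> M x < M y"
  proof (intro ballI impI)
    fix x y assume xy: "x \<in> P" "y \<in> P" "lt le x y"
    show "M x < M y"
    proof (cases "y = m")
      case True
      then have "x \<noteq> m" using xy by (auto simp: lt_def)
      then have "M' x \<in> {1..k}" using bij' xy by (auto simp: bij_betw_def P'_def)
      then show ?thesis using True \<open>x \<noteq> m\<close> by (simp add: M_def)
    next
      case False
      then have "x \<noteq> m" using mmax xy by auto
      then show ?thesis using False mono' xy by (auto simp: M_def P'_def)
    qed
  qed
  ultimately show ?case by blast
qed

lemma tree_root:
  assumes "rooted_tree_poset P le"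
  shows "\<exists>r\<in>P. \<forall>x\<in>P. le x r"
proof -
  have fp: "finite_poset P le" and con: "poset_connected P le"
    and tr: "\<forall>x\<in>P. \<forall>y\<in>P. \<forall>z\<in>P. covers P le x y \<and> covers P le x z \<longrightarrow> y = z"
    using assms by (auto simp: rooted_tree_poset_def)
  note F = fp_facts[OF fp]
  have cover_ex: "\<exists>c. covers P le x c \<and> le c y" if xy: "x \<in> P" "y \<in> P" "lt le x y" for x y
  proof -
    let ?S = "{z\<in>P. lt le x z \<and> le z y}"
    have "y \<in> ?S" using xy F(2) by auto
    then obtain z where z: "z \<in> ?S" and zmin: "\<forall>w. w \<in> ?S \<longrightarrow> card {u\<in>P. le u z} \<le> card {u\<in>P. le u w}"
      using ex_has_least_nat[of "\<lambda>w. w \<in> ?S" y "\<lambda>w. card {u\<in>P. le u w}"] by blast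
    have "covers P le x z"
      unfolding covers_def
    proof (intro conjI notI)
      show "x \<in> P" "z \<in> P" "lt le x z" using xy z by auto
      assume "\<exists>w\<in>P. lt le x w \<and> lt le w z"
      then obtain w where w: "w \<in> P" "lt le x w" "lt le w z" by blast
      have "w \<in> ?S" using w z F(4)[of w z y] xy by (auto simp: lt_def)
      have "{u\<in>P. le u w} \<subset> {u\<in>P. le u z}"
      proof
        show "{u\<in>P. le u w} \<subseteq> {u\<in>P. le u z}" using F(4) w z by (auto simp: lt_def)
        show "{u\<in>P. le u w} \<noteq> {u\<in>P. le u z}" using F(2) F(3)[of w z] w z by (auto simp: lt_def)
      qed
      then have "card {u\<in>P. le u w} < card {u\<in>P. le u z}" using F(1) by (intro psubset_card_mono) auto
      then show False using zmin \<open>w \<in> ?S\<close> by fastforce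
    qed
    then show ?thesis using z by blast
  qed
  have A: "le y z \<or> le z y" if "x \<in> P" "y\<in>P" "z\<in>P" "le x y" "le x z" for x y z
    using that
  proof (induction x arbitrary: y z rule: measure_induct_rule[where f="\<lambda>x. card {w\<in>P. le x w}"])
    case (less x)
    show ?case
    proof (cases "y = x \<or> z = x")
      case True then show ?thesis using less.prems by auto
    next
      case False
      then have "lt le x y" "lt le x z" using less.prems by (auto simp: lt_def)
      then obtain c1 c2 where c1: "covers P le x c1" "le c1 y" and c2: "covers P le x c2" "le c2 z"
        using cover_ex less.prems by meson
      have c1P: "c1 \<in> P" and xc: "lt le x c1" using c1 by (auto simp: covers_def)
      have c2P: "c2 \<in> P" using c2 by (auto simp: covers_def)
      have c12: "c1 = c2" using tr less.prems(1) c1P c2P c1(1) c2(1) by blast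
      have lxc: "le x c1" "x \<noteq> c1" using xc by (auto simp: lt_def)
      have "{w\<in>P. le c1 w} \<subset> {w\<in>P. le x w}"
      proof
        show "{w\<in>P. le c1 w} \<subseteq> {w\<in>P. le x w}"
        proof
          fix w assume "w \<in> {w\<in>P. le c1 w}"
          then have "w \<in> P" "le c1 w" by auto
          then show "w \<in> {w\<in>P. le x w}" using F(4)[OF less.prems(1) c1P, of w] lxc by auto
        qed
        have "x \<in> {w\<in>P. le x w}" using F(2)[OF less.prems(1)] less.prems(1) by auto
        moreover have "x \<notin> {w\<in>P. le c1 w}" using F(3)[OF less.prems(1) c1P] lxc by auto
        ultimately show "{w\<in>P. le c1 w} \<noteq> {w\<in>P. le x w}" by blast
      qed
      then have clt: "card {w\<in>P. le c1 w} < card {w\<in>P. le x w}" using F(1) by (intro psubset_card_mono) auto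
      have "le c1 z" using c2 c12 by simp
      then show ?thesis by (rule less.IH[OF clt c1P less.prems(2,3) c1(2)])
    qed
  qed
  obtain x0 where x0: "x0 \<in> P" using con by (auto simp: poset_connected_def)
  let ?S = "{z\<in>P. le x0 z}"
  have "x0 \<in> ?S" using x0 F(2) by auto
  then obtain r where r: "r \<in> ?S" and rmin: "\<forall>w. w \<in> ?S \<longrightarrow> card {u\<in>P. le r u} \<le> card {u\<in>P. le w u}"
    using ex_has_least_nat[of "\<lambda>w. w \<in> ?S" x0 "\<lambda>w. card {u\<in>P. le w u}"] by blast
  have rmax: "\<not> lt le r y" if "y \<in> P" for y
  proof
    assume ry: "lt le r y"
    have rP: "r \<in> P" "le x0 r" using r by auto
    have lry: "le r y" "r \<noteq> y" using ry by (auto simp: lt_def)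
    have "{u\<in>P. le y u} \<subset> {u\<in>P. le r u}"
    proof
      show "{u\<in>P. le y u} \<subseteq> {u\<in>P. le r u}"
      proof
        fix w assume "w \<in> {u\<in>P. le y u}"
        then have "w \<in> P" "le y w" by auto
        then show "w \<in> {u\<in>P. le r u}" using F(4)[OF rP(1) that, of w] lry by auto
      qed
      have "y \<in> {u\<in>P. le y u}" using F(2)[OF that] that by auto
      moreover have "y \<notin> {u\<in>P. le r u} \<or> y \<in> {u\<in>P. le r u}" by blast
      moreover have "r \<in> {u\<in>P. le r u}" using F(2)[OF rP(1)] rP by auto
      moreover have "r \<notin> {u\<in>P. le y u}" using F(3)[OF rP(1) that] lry by auto
      ultimately show "{u\<in>P. le y u} \<noteq> {u\<in>P. le r u}" by blast
    qed
    then have "card {u\<in>P. le y u} < card {u\<in>P. le r u}" using F(1) by (intro psubset_card_mono) auto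
    moreover have "y \<in> ?S" using F(4)[OF x0 rP(1) that] rP lry that by auto
    ultimately show False using rmin by fastforce
  qed
  let ?R = "{(a, b). a \<in> P \<and> b \<in> P \<and> (le a b \<or> le b a)}"
  have "le x r" if "x \<in> P" for x
  proof -
    have "(x0, x) \<in> ?R\<^sup>*" using con x0 that by (auto simp: poset_connected_def)
    then show ?thesis
    proof (induction rule: rtrancl_induct)
      case base then show ?case using r by auto
    next
      case (step y z)
      then have yz: "y \<in> P" "z \<in> P" "le y z \<or> le z y" by auto
      show ?case
      proof (cases "le z y")
        case True then show ?thesis using F(4)[of z y r] yz r step.IH by auto
      next
        case False
        then have "le y z" using yz by auto
        then have "le z r \<or> le r z" using A[of y z r] yz r step.IH by auto
        then show ?thesis using rmax[of z] yz r by (auto simp: lt_def)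
      qed
    qed
  qed
  then show ?thesis using r by blast
qed



definition Lv :: "'a set \<Rightarrow> 'a \<Rightarrow> ('a \<Rightarrow> nat) \<Rightarrow> 'a \<Rightarrow> 'a \<Rightarrow> nat" where
  "Lv P r M v = (\<lambda>x. if x \<notin> P then 0 else if x = v then 1 else if x = r then M v + 1 else M x + 1)"

definition Lab :: "'a set \<Rightarrow> 'a \<Rightarrow> ('a \<Rightarrow> nat) \<Rightarrow> 'a \<Rightarrow> 'a \<Rightarrow> 'a \<Rightarrow> nat" where
  "Lab P r M a b = (\<lambda>x. if x \<notin> P then 0 else if x = a then 1 else if x = b then M a + 1
     else if x = r then M b + 1 else M x + 1)"

context rtp
begin

lemma chain_end_eq:
  assumes "is_maximal P le (chain_elt P le L k)" "\<And>i. i < k \<Longrightarrow> \<not> is_maximal P le (chain_elt P le L i)"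
  shows "chain_end P le L = k"
  unfolding chain_end_def
proof (rule Least_equality)
  show "is_maximal P le (chain_elt P le L k)" by (rule assms(1))
  fix y assume "is_maximal P le (chain_elt P le L y)"
  then show "k \<le> y" using assms(2) leI by blast
qed

lemma Mfacts:
  assumes "M \<in> labelings P" "M r = card P"
  shows "\<And>x y. x \<in> P \<Longrightarrow> y \<in> P \<Longrightarrow> M x = M y \<Longrightarrow> x = y"
    "\<And>x. x \<in> P \<Longrightarrow> 1 \<le> M x"
    "\<And>x. x \<in> P \<Longrightarrow> x \<noteq> r \<Longrightarrow> M x < card P"
    "\<And>x. x \<notin> P \<Longrightarrow> M x = 0"
proof -
  show i: "\<And>x y. x \<in> P \<Longrightarrow> y \<in> P \<Longrightarrow> M x = M y \<Longrightarrow> x = y" using lab(1)[OF assms(1)] by (meson inj_onD)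
  show "\<And>x. x \<in> P \<Longrightarrow> 1 \<le> M x" using lab_range[OF assms(1)] by auto
  show "\<And>x. x \<in> P \<Longrightarrow> x \<noteq> r \<Longrightarrow> M x < card P"
  proof -
    fix x assume "x \<in> P" "x \<noteq> r"
    then have "M x \<noteq> M r" using i rP by blast
    then show "M x < card P" using lab_range[OF assms(1) \<open>x \<in> P\<close>] assms(2) by auto
  qed
  show "\<And>x. x \<notin> P \<Longrightarrow> M x = 0" using lab(3)[OF assms(1)] .
qed

lemma Lv_in:
  assumes M: "M \<in> labelings P" "M r = card P" and v: "v \<in> P"
  shows "Lv P r M v \<in> labelings P"
proof -
  note MF = Mfacts[OF M]
  let ?L = "Lv P r M v"
  have inj: "inj_on ?L P"
  proof (rule inj_onI)
    fix x y assume xy: "x \<in> P" "y \<in> P" "?L x = ?L y"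
    show "x = y"
    proof (rule ccontr)
      assume ne: "x \<noteq> y"
      have "M x \<ge> 1" "M y \<ge> 1" "M v \<ge> 1" using MF(2) xy v by auto
      then show False using xy ne MF(1)[OF xy(1) v] MF(1)[OF xy(2) v] MF(1)[OF xy(1) xy(2)]
        by (auto simp: Lv_def split: if_splits)
    qed
  qed
  have im: "?L ` P \<subseteq> {1..card P}"
  proof
    fix w assume "w \<in> ?L ` P"
    then obtain x where x: "x \<in> P" "w = ?L x" by auto
    show "w \<in> {1..card P}"
    proof (cases "x = v")
      case True then show ?thesis using x cardP by (simp add: Lv_def)
    next
      case False
      show ?thesis
      proof (cases "x = r")
        case True then show ?thesis using x False MF(3)[OF v] by (auto simp: Lv_def)
      next
        case False2: False
        then show ?thesis using x False MF(3)[OF x(1)] by (auto simp: Lv_def)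
      qed
    qed
  qed
  show ?thesis using mk_bij[OF F(1) inj im] by (simp add: labelings_def Lv_def)
qed

lemma Lv_pre:
  assumes M: "M \<in> labelings P" "M r = card P" and v: "v \<in> P"
    and cond: "\<And>z. z \<in> P \<Longrightarrow> lt le v z \<Longrightarrow> z \<noteq> r \<Longrightarrow> M v < M z"
  shows "promotion P le (Lv P r M v) = M"
proof -
  note MF = Mfacts[OF M]
  let ?L = "Lv P r M v"
  have L: "?L \<in> labelings P" by (rule Lv_in[OF M v])
  let ?c = "chain_elt P le ?L"
  have "?c 0 \<in> P" "?L (?c 0) = 1" using c0[OF L] by auto
  moreover have "?L v = 1" using v by (simp add: Lv_def)
  ultimately have c0v: "?c 0 = v" using lab(1)[OF L] v by (metis inj_onD)
  show ?thesis
  proof (cases "v = r")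
    case True
    have ce: "chain_end P le ?L = 0" by (rule chain_end_eq) (use c0v True max_iff in auto)
    have pc: "promotion_chain P le ?L = {r}" using ce c0v True by (simp add: promotion_chain_def)
    show ?thesis
    proof
      fix x show "promotion P le ?L x = M x"
        using ce c0v True pc MF(4)[of x] M(2) by (auto simp: promotion_def Lv_def)
    qed
  next
    case False
    have vr: "lt le v r" using lt_r[OF v False] .
    have ls: "lsucc P le ?L v = r"
    proof (rule lsucc_eq[OF lab(1)[OF L] rP vr])
      fix z assume z: "z \<in> P" "lt le v z"
      have "z \<noteq> v" using z by (auto simp: lt_def)
      then show "?L r \<le> ?L z" using z cond[of z] False rP by (auto simp: Lv_def)
    qed
    have c1: "?c 1 = r" using ls c0v c_Suc[of ?L 0] by simp
    have ce: "chain_end P le ?L = 1"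
      by (rule chain_end_eq) (use c0v c1 False max_iff in auto)
    have pc: "promotion_chain P le ?L = {v, r}"
    proof -
      have "{0..1::nat} = {0, 1}" by auto
      then show ?thesis using ce c0v c1 by (simp add: promotion_chain_def)
    qed
    show ?thesis
    proof
      fix x show "promotion P le ?L x = M x"
        using ce c1 pc ls False MF(4)[of x] M(2) v rP by (auto simp: promotion_def Lv_def)
    qed
  qed
qed

lemma Lab_in:
  assumes M: "M \<in> labelings P" "M r = card P" and ab: "a \<in> P" "b \<in> P" "lt le a b" "lt le b r"
    and mono: "\<And>x y. x \<in> P \<Longrightarrow> y \<in> P \<Longrightarrow> lt le x y \<Longrightarrow> M x < M y"
  shows "Lab P r M a b \<in> labelings P"
proof -
  note MF = Mfacts[OF M]
  let ?L = "Lab P r M a b"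
  have ar: "lt le a r" using lt_trans[OF ab(1,2) rP ab(3,4)] .
  have ne: "a \<noteq> b" "b \<noteq> r" "a \<noteq> r" using ab ar by (auto simp: lt_def)
  have Mab: "M a < M b" "M b < card P" using mono[OF ab(1,2,3)] MF(3)[OF ab(2) ne(2)] by auto
  have m1: "\<And>u. u \<in> P \<Longrightarrow> M u \<ge> 1" using MF(2) by auto
  have Mne: "\<And>u w. u \<in> P \<Longrightarrow> w \<in> P \<Longrightarrow> M u = M w \<Longrightarrow> u = w" using MF(1) by blast
  have Lo: "?L u = M u + 1" if "u \<in> P" "u \<noteq> a" "u \<noteq> b" "u \<noteq> r" for u
    using that by (simp add: Lab_def)
  have La: "?L a = 1" using ab by (simp add: Lab_def)
  have Lb: "?L b = M a + 1" using ab ne by (simp add: Lab_def)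
  have Lr: "?L r = M b + 1" using rP ne by (simp add: Lab_def)
  have k1: "u = a" if "u \<in> P" "?L u = 1" for u
  proof (rule ccontr)
    assume "u \<noteq> a"
    then consider "u = b" | "u = r" | "u \<noteq> a \<and> u \<noteq> b \<and> u \<noteq> r" by blast
    then show False
    proof cases
      case 1 then show ?thesis using that Lb m1[OF ab(1)] by simp
    next
      case 2 then show ?thesis using that Lr m1[OF ab(2)] by simp
    next
      case 3 then show ?thesis using that Lo[of u] m1[OF that(1)] by simp
    qed
  qed
  have k2: "u = b" if "u \<in> P" "?L u = M a + 1" for u
  proof (rule ccontr)
    assume "u \<noteq> b"
    then consider "u = a" | "u = r" | "u \<noteq> a \<and> u \<noteq> b \<and> u \<noteq> r" by blast
    then show False
    proof cases
      case 1 then show ?thesis using that La m1[OF ab(1)] by simp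
    next
      case 2 then show ?thesis using that Lr Mab by simp
    next
      case 3 then show ?thesis using that Lo[of u] Mne[OF that(1) ab(1)] by simp
    qed
  qed
  have k3: "u = r" if "u \<in> P" "?L u = M b + 1" for u
  proof (rule ccontr)
    assume "u \<noteq> r"
    then consider "u = a" | "u = b" | "u \<noteq> a \<and> u \<noteq> b \<and> u \<noteq> r" by blast
    then show False
    proof cases
      case 1 then show ?thesis using that La m1[OF ab(2)] by simp
    next
      case 2 then show ?thesis using that Lb Mab by simp
    next
      case 3 then show ?thesis using that Lo[of u] Mne[OF that(1) ab(2)] by simp
    qed
  qed
  have inj: "inj_on ?L P"
  proof (rule inj_onI)
    fix x y assume xy: "x \<in> P" "y \<in> P" "?L x = ?L y"
    consider "x = a" | "x = b" | "x = r" | "x \<noteq> a \<and> x \<noteq> b \<and> x \<noteq> r" by blast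
    then show "x = y"
    proof cases
      case 1 then show ?thesis using k1[OF xy(2)] xy(3) La by metis
    next
      case 2 then show ?thesis using k2[OF xy(2)] xy(3) Lb by metis
    next
      case 3 then show ?thesis using k3[OF xy(2)] xy(3) Lr by metis
    next
      case 4
      note x4 = this
      consider "y = a" | "y = b" | "y = r" | "y \<noteq> a \<and> y \<noteq> b \<and> y \<noteq> r" by blast
      then show ?thesis
      proof cases
        case 1 then show ?thesis using k1[OF xy(1)] xy(3) La by metis
      next
        case 2 then show ?thesis using k2[OF xy(1)] xy(3) Lb by metis
      next
        case 3 then show ?thesis using k3[OF xy(1)] xy(3) Lr by metis
      next
        case 4
        have "M x + 1 = M y + 1" using Lo[OF xy(1)] Lo[OF xy(2)] x4 4 xy(3) by metis
        then show ?thesis using Mne[OF xy(1,2)] by simp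
      qed
    qed
  qed
  have im: "?L ` P \<subseteq> {1..card P}"
  proof
    fix w assume "w \<in> ?L ` P"
    then obtain x where x: "x \<in> P" "w = ?L x" by auto
    consider "x = a" | "x = b" | "x = r" | "x \<noteq> a \<and> x \<noteq> b \<and> x \<noteq> r" by blast
    then show "w \<in> {1..card P}"
    proof cases
      case 1 then show ?thesis using x La cardP by simp
    next
      case 2 then show ?thesis using x Lb Mab by simp
    next
      case 3 then show ?thesis using x Lr Mab by simp
    next
      case 4 then show ?thesis using x Lo[OF x(1)] MF(3)[OF x(1)] by simp
    qed
  qed
  show ?thesis using mk_bij[OF F(1) inj im] by (simp add: labelings_def Lab_def)
qed

lemma Lab_vals:
  assumes "a \<in> P" "b \<in> P" "a \<noteq> b" "b \<noteq> r" "a \<noteq> r"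
  shows "Lab P r M a b a = 1" "Lab P r M a b b = M a + 1" "Lab P r M a b r = M b + 1"
    "\<And>u. u \<in> P \<Longrightarrow> u \<noteq> a \<Longrightarrow> u \<noteq> b \<Longrightarrow> u \<noteq> r \<Longrightarrow> Lab P r M a b u = M u + 1"
    "\<And>u. u \<notin> P \<Longrightarrow> Lab P r M a b u = 0"
  using assms rP by (auto simp: Lab_def)

lemma Lab_pre:
  assumes M: "M \<in> labelings P" "M r = card P" and ab: "a \<in> P" "b \<in> P" "lt le a b" "lt le b r"
    and mono: "\<And>x y. x \<in> P \<Longrightarrow> y \<in> P \<Longrightarrow> lt le x y \<Longrightarrow> M x < M y"
  shows "promotion P le (Lab P r M a b) = M"
proof -
  note MF = Mfacts[OF M]
  let ?L = "Lab P r M a b"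
  have L: "?L \<in> labelings P" by (rule Lab_in[OF M ab mono])
  have ar: "lt le a r" using lt_trans[OF ab(1,2) rP ab(3,4)] .
  have ne: "a \<noteq> b" "b \<noteq> r" "a \<noteq> r" using ab ar by (auto simp: lt_def)
  note LV = Lab_vals[OF ab(1,2) ne, where M=M]
  have Mab: "M a < M b" "M b < card P" using mono[OF ab(1,2,3)] MF(3)[OF ab(2) ne(2)] by auto
  let ?c = "chain_elt P le ?L"
  have "?c 0 \<in> P" "?L (?c 0) = 1" using c0[OF L] by auto
  then have c0a: "?c 0 = a" using lab(1)[OF L] ab(1) LV(1) by (metis inj_onD)
  have ls1: "lsucc P le ?L a = b"
  proof (rule lsucc_eq[OF lab(1)[OF L] ab(2) ab(3)])
    fix z assume z: "z \<in> P" "lt le a z"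
    have "z \<noteq> a" using z by (auto simp: lt_def)
    consider "z = b" | "z = r" | "z \<noteq> a \<and> z \<noteq> b \<and> z \<noteq> r" using \<open>z \<noteq> a\<close> by blast
    then show "?L b \<le> ?L z"
    proof cases
      case 1 then show ?thesis by simp
    next
      case 2 then show ?thesis using LV(2,3) Mab by simp
    next
      case 3 then show ?thesis using LV(2) LV(4)[OF z(1)] mono[OF ab(1) z(1) z(2)] by simp
    qed
  qed
  have ls2: "lsucc P le ?L b = r"
  proof (rule lsucc_eq[OF lab(1)[OF L] rP ab(4)])
    fix z assume z: "z \<in> P" "lt le b z"
    have "z \<noteq> b" using z by (auto simp: lt_def)
    moreover have "z \<noteq> a" using z lt_asym[OF ab(1,2) ab(3)] by auto
    ultimately consider "z = r" | "z \<noteq> a \<and> z \<noteq> b \<and> z \<noteq> r" by blast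
    then show "?L r \<le> ?L z"
    proof cases
      case 1 then show ?thesis by simp
    next
      case 2 then show ?thesis using LV(3) LV(4)[OF z(1)] mono[OF ab(2) z(1) z(2)] by simp
    qed
  qed
  have c1: "?c 1 = b" using ls1 c0a c_Suc[of ?L 0] by simp
  have c2: "?c 2 = r" using ls2 c1 c_Suc[of ?L 1] by (simp add: numeral_2_eq_2)
  have ce: "chain_end P le ?L = 2"
  proof (rule chain_end_eq)
    show "is_maximal P le (?c 2)" using c2 max_iff by simp
    fix i :: nat assume i2: "i < 2"
    show "\<not> is_maximal P le (?c i)"
    proof (cases "i = 0")
      case True then show ?thesis using c0a ne(3) max_iff by simp
    next
      case False
      then have "i = 1" using i2 by linarith
      then show ?thesis using c1 ne(2) max_iff by simp
    qed
  qed
  have pc: "promotion_chain P le ?L = {a, b, r}"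
  proof -
    have e: "{0..2::nat} = {0, 1, 2}" by auto
    have "promotion_chain P le ?L = ?c ` {0..2}" using ce by (simp only: promotion_chain_def)
    also have "\<dots> = ?c ` {0, 1, 2}" by (simp only: e)
    also have "\<dots> = {?c 0, ?c 1, ?c 2}" by simp
    finally show ?thesis by (simp only: c0a c1 c2)
  qed
  have pe: "promotion P le ?L x = (if x \<notin> P then 0 else if x = r then card P
     else if x \<in> {a, b, r} then ?L (lsucc P le ?L x) - 1 else ?L x - 1)" for x
    unfolding promotion_def using ce c2 pc by simp
  show ?thesis
  proof
    fix x
    consider "x \<notin> P" | "x = r" | "x = a" | "x = b" | "x \<in> P \<and> x \<noteq> a \<and> x \<noteq> b \<and> x \<noteq> r" by blast
    then show "promotion P le ?L x = M x"
    proof cases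
      case 1 then show ?thesis using pe[of x] MF(4) by simp
    next
      case 2 then show ?thesis using pe[of x] M(2) rP by simp
    next
      case 3 then show ?thesis using pe[of x] ab ne ls1 LV(2) by simp
    next
      case 4 then show ?thesis using pe[of x] ab ne ls2 LV(3) by simp
    next
      case 5 then show ?thesis using pe[of x] LV(4)[of x] by simp
    qed
  qed
qed

end


definition sw :: "nat \<Rightarrow> nat \<Rightarrow> nat \<Rightarrow> nat" where
  "sw n k v = (if v = k then n else if v = n then k else v)"

lemma sw_inv: "sw n k (sw n k v) = v" by (simp add: sw_def)

lemma fin_lab: "finite P \<Longrightarrow> finite (labelings P)"
proof -
  assume fP: "finite P"
  have "labelings P \<subseteq> {f. \<forall>x. (x \<in> P \<longrightarrow> f x \<in> {1..card P}) \<and> (x \<notin> P \<longrightarrow> f x = 0)}"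
  proof
    fix L assume "L \<in> labelings P"
    then have "bij_betw L P {1..card P}" "\<forall>x. x \<notin> P \<longrightarrow> L x = 0" by (auto simp: labelings_def)
    then show "L \<in> {f. \<forall>x. (x \<in> P \<longrightarrow> f x \<in> {1..card P}) \<and> (x \<notin> P \<longrightarrow> f x = 0)}"
      using bij_betwE by fastforce
  qed
  then show ?thesis using finite_set_of_finite_funs[OF fP finite_atLeastAtMost] finite_subset by blast
qed

lemma var_id: "finite A \<Longrightarrow> (\<Sum>x\<in>A. ((g x::real) - c)^2) = (\<Sum>x\<in>A. (g x)^2) - 2 * c * (\<Sum>x\<in>A. g x) + c^2 * real (card A)"
  by (induction A rule: finite_induct) (auto simp: power2_diff algebra_simps)

context rtp
begin

lemma sw_lab:
  assumes L: "L \<in> labelings P" and k: "k \<in> {1..card P}"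
  shows "(\<lambda>x. sw (card P) k (L x)) \<in> labelings P"
proof -
  have b1: "bij_betw L P {1..card P}" using L by (simp add: labelings_def)
  have b2: "bij_betw (sw (card P) k) {1..card P} {1..card P}"
    by (rule bij_betw_byWitness[where f'="sw (card P) k"]) (use k cardP in \<open>auto simp: sw_def\<close>)
  have "bij_betw (sw (card P) k \<circ> L) P {1..card P}" by (rule bij_betw_trans[OF b1 b2])
  moreover have "\<forall>x. x\<notin>P \<longrightarrow> sw (card P) k (L x) = 0" using lab(3)[OF L] k cardP by (auto simp: sw_def)
  ultimately show ?thesis by (simp add: labelings_def o_def)
qed

lemma card_XT: "card (labelings P) = card {M \<in> labelings P. M r = card P} * card P"
proof -
  let ?X = "labelings P" and ?T = "{M \<in> labelings P. M r = card P}" and ?n = "card P"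
  define h where "h L = ((\<lambda>x. sw ?n (L r) (L x)), L r)" for L :: "'a \<Rightarrow> nat"
  define h' where "h' p = (\<lambda>x. sw ?n (snd p) (fst p x))" for p :: "('a \<Rightarrow> nat) \<times> nat"
  have "bij_betw h ?X (?T \<times> {1..?n})"
  proof (rule bij_betw_byWitness[where f'=h'])
    show "\<forall>a\<in>?X. h' (h a) = a" by (simp add: h_def h'_def sw_inv)
    show "\<forall>a'\<in>?T \<times> {1..?n}. h (h' a') = a'"
    proof
      fix p assume p: "p \<in> ?T \<times> {1..?n}"
      then obtain M k where pk: "p = (M, k)" "M \<in> ?X" "M r = ?n" "k \<in> {1..?n}" by auto
      have "h' p r = k" using pk by (simp add: h'_def sw_def)
      then show "h (h' p) = p" using pk by (simp add: h_def h'_def sw_inv)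
    qed
    show "h ` ?X \<subseteq> ?T \<times> {1..?n}"
    proof
      fix q assume "q \<in> h ` ?X"
      then obtain L where L: "L \<in> ?X" "q = h L" by auto
      have Lr: "L r \<in> {1..?n}" using lab_range[OF L(1) rP] by auto
      have "(\<lambda>x. sw ?n (L r) (L x)) \<in> ?X" by (rule sw_lab[OF L(1) Lr])
      moreover have "sw ?n (L r) (L r) = ?n" by (simp add: sw_def)
      ultimately show "q \<in> ?T \<times> {1..?n}" using L Lr by (simp add: h_def)
    qed
    show "h' ` (?T \<times> {1..?n}) \<subseteq> ?X"
    proof
      fix q assume "q \<in> h' ` (?T \<times> {1..?n})"
      then obtain M k where "M \<in> ?X" "k \<in> {1..?n}" "q = h' (M, k)" by auto
      then show "q \<in> ?X" using sw_lab[of M k] by (simp add: h'_def)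
    qed
  qed
  then have "card ?X = card (?T \<times> {1..?n})" by (rule bij_betw_same_card)
  then show ?thesis by (simp add: card_cartesian_product)
qed

lemma linlab: "\<exists>M. M \<in> labelings P \<and> M r = card P \<and> (\<forall>x\<in>P. \<forall>y\<in>P. lt le x y \<longrightarrow> M x < M y)"
proof -
  obtain M0 where b: "bij_betw M0 P {1..card P}" and mono: "\<forall>x\<in>P. \<forall>y\<in>P. lt le x y \<longrightarrow> M0 x < M0 y"
    using linext[OF fp] by blast
  define M where "M x = (if x \<in> P then M0 x else 0)" for x
  have "bij_betw M P {1..card P} = bij_betw M0 P {1..card P}" by (rule bij_betw_cong) (simp add: M_def)
  then have bM: "bij_betw M P {1..card P}" using b by simp
  have MLb: "M \<in> labelings P" using bM by (simp add: labelings_def M_def)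
  have Mr: "M r = card P"
  proof (rule ccontr)
    assume ne: "M r \<noteq> card P"
    have "card P \<in> M ` P" using bM cardP by (auto simp: bij_betw_def)
    then obtain y where y: "y \<in> P" "M y = card P" by auto
    then have "y \<noteq> r" using ne by auto
    then have "M0 y < M0 r" using mono y(1) rP lt_r[OF y(1)] by blast
    then have "M y < M r" using y(1) rP by (simp add: M_def)
    moreover have "M r \<le> card P" using lab_range[OF MLb rP] by auto
    ultimately show False using y by auto
  qed
  show ?thesis using MLb Mr mono by (auto simp: M_def)
qed

lemma Lv_one: assumes "M \<in> labelings P" "M r = card P" "w \<in> P" "x \<in> P" "Lv P r M w x = 1"
  shows "x = w"
proof (rule ccontr)
  assume "x \<noteq> w"
  have "M x \<ge> 1" "M w \<ge> 1" using Mfacts(2)[OF assms(1,2)] assms(3,4) by auto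
  then show False using assms(4,5) \<open>x \<noteq> w\<close> by (auto simp: Lv_def split: if_splits)
qed

lemma Lv_inj: assumes "M \<in> labelings P" "M r = card P" shows "inj_on (Lv P r M) P"
proof (rule inj_onI)
  fix v w assume vw: "v \<in> P" "w \<in> P" "Lv P r M v = Lv P r M w"
  have "Lv P r M w w = 1" using vw by (simp add: Lv_def)
  then have "Lv P r M v w = 1" using vw by simp
  then show "v = w" using Lv_one[OF assms vw(1,2)] by simp
qed

theorem loc_main:
  "deg (labelings P) (promotion P le) \<ge> real (card P) \<and>
   (deg (labelings P) (promotion P le) = real (card P) \<longleftrightarrow> (\<forall>v\<in>P. v \<noteq> r \<longrightarrow> covers P le v r))"
proof -
  let ?X = "labelings P" and ?f = "promotion P le" and ?n = "card P"
  let ?T = "{M \<in> labelings P. M r = card P}"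
  define fib where "fib M = card {L \<in> ?X. ?f L = M}" for M
  have finX: "finite ?X" by (rule fin_lab[OF F(1)])
  have finT: "finite ?T" using finX by simp
  have TX: "?T \<subseteq> ?X" by auto
  have img: "\<And>L. L \<in> ?X \<Longrightarrow> ?f L \<in> ?T" using prom_in by auto
  have sumfib: "(\<Sum>M\<in>?T. fib M) = card ?X"
  proof -
    have "?X = (\<Union>M\<in>?T. {L \<in> ?X. ?f L = M})" using img by auto
    then have "card ?X = card (\<Union>M\<in>?T. {L \<in> ?X. ?f L = M})" by simp
    also have "\<dots> = (\<Sum>M\<in>?T. card {L \<in> ?X. ?f L = M})"
      by (rule card_UN_disjoint) (use finT finX in auto)
    finally show ?thesis by (simp add: fib_def)
  qed
  have NT: "card ?X = card ?T * ?n" by (rule card_XT)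
  obtain M0 where M0: "M0 \<in> ?X" "M0 r = ?n" "\<forall>x\<in>P. \<forall>y\<in>P. lt le x y \<longrightarrow> M0 x < M0 y"
    using linlab by blast
  have Npos: "card ?X > 0" using M0 finX card_gt_0_iff by blast
  have S2: "(\<Sum>M\<in>?X. real (card {y\<in>?X. ?f y = M}) ^ 2) = (\<Sum>M\<in>?T. real (fib M) ^ 2)"
  proof -
    have z: "real (fib M) ^ 2 = 0" if "M \<in> ?X - ?T" for M
    proof -
      have e: "{L \<in> ?X. ?f L = M} = {}" using img that by auto
      show ?thesis unfolding fib_def e by simp
    qed
    have "(\<Sum>M\<in>?X. real (fib M) ^ 2) = (\<Sum>M\<in>?T. real (fib M) ^ 2)"
      by (rule sum.mono_neutral_right[OF finX TX]) (use z in blast)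
    then show ?thesis by (simp add: fib_def)
  qed
  define D where "D = (\<Sum>M\<in>?T. (real (fib M) - real ?n)^2)"
  have e1: "D = (\<Sum>M\<in>?T. real (fib M)^2) - 2 * real ?n * (\<Sum>M\<in>?T. real (fib M)) + real ?n ^ 2 * real (card ?T)"
    unfolding D_def by (rule var_id[OF finT])
  have e2: "(\<Sum>M\<in>?T. real (fib M)) = real (card ?X)" using sumfib by (metis of_nat_sum)
  have e3: "real (card ?X) = real (card ?T) * real ?n" using NT by simp
  have key: "(\<Sum>M\<in>?T. real (fib M)^2) = real ?n * real (card ?X) + D"
    using e1 e2 e3 by (simp add: power2_eq_square algebra_simps)
  have degeq: "deg ?X ?f = real ?n + D / real (card ?X)"
  proof -
    have "deg ?X ?f = (\<Sum>M\<in>?T. real (fib M)^2) / real (card ?X)" by (simp add: deg_def S2)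
    also have "\<dots> = (real ?n * real (card ?X) + D) / real (card ?X)" by (simp only: key)
    also have "\<dots> = real ?n + D / real (card ?X)" using Npos by (simp add: add_divide_distrib)
    finally show ?thesis .
  qed
  have Dnn: "D \<ge> 0" unfolding D_def by (rule sum_nonneg) simp
  have ge: "deg ?X ?f \<ge> real ?n" using degeq Dnn Npos by simp
  have eqiff: "deg ?X ?f = real ?n \<longleftrightarrow> (\<forall>M\<in>?T. fib M = ?n)"
  proof -
    have "deg ?X ?f = real ?n \<longleftrightarrow> D = 0" using degeq Npos by simp
    also have "\<dots> \<longleftrightarrow> (\<forall>M\<in>?T. (real (fib M) - real ?n)^2 = 0)"
      unfolding D_def by (rule sum_nonneg_eq_0_iff[OF finT]) simp
    also have "\<dots> \<longleftrightarrow> (\<forall>M\<in>?T. fib M = ?n)" by simp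
    finally show ?thesis .
  qed
  have fib_ge: "card (Lv P r M ` P) \<le> fib M" if "M \<in> ?T"
    "\<And>v. v \<in> P \<Longrightarrow> (\<And>z. z \<in> P \<Longrightarrow> lt le v z \<Longrightarrow> z \<noteq> r \<Longrightarrow> M v < M z)" for M
  proof -
    have "Lv P r M ` P \<subseteq> {L \<in> ?X. ?f L = M}"
      using Lv_in Lv_pre that by auto
    then show ?thesis unfolding fib_def using finX by (intro card_mono) auto
  qed
  have cardLv: "card (Lv P r M ` P) = ?n" if "M \<in> ?T" for M
    using Lv_inj[of M] that by (simp add: card_image)
  have "(\<forall>M\<in>?T. fib M = ?n) \<longleftrightarrow> (\<forall>v\<in>P. v \<noteq> r \<longrightarrow> covers P le v r)"
  proof
    assume all: "\<forall>M\<in>?T. fib M = ?n"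
    show "\<forall>v\<in>P. v \<noteq> r \<longrightarrow> covers P le v r"
    proof (rule ccontr)
      assume "\<not> ?thesis"
      then obtain v where v: "v \<in> P" "v \<noteq> r" "\<not> covers P le v r" by blast
      then obtain z where z: "z \<in> P" "lt le v z" "lt le z r"
        using lt_r[OF v(1,2)] rP by (auto simp: covers_def)
      have mono: "\<And>x y. x \<in> P \<Longrightarrow> y \<in> P \<Longrightarrow> lt le x y \<Longrightarrow> M0 x < M0 y" using M0(3) by blast
      have M0T: "M0 \<in> ?T" using M0 by simp
      let ?S = "insert (Lab P r M0 v z) (Lv P r M0 ` P)"
      have Sf: "?S \<subseteq> {L \<in> ?X. ?f L = M0}"
        using Lv_in[OF M0(1,2)] Lv_pre[OF M0(1,2)] mono Lab_in[OF M0(1,2) v(1) z mono] Lab_pre[OF M0(1,2) v(1) z mono]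
        by auto
      have notin: "Lab P r M0 v z \<notin> Lv P r M0 ` P"
      proof
        assume "Lab P r M0 v z \<in> Lv P r M0 ` P"
        then obtain w where w: "w \<in> P" "Lab P r M0 v z = Lv P r M0 w" by auto
        have "Lab P r M0 v z v = 1" using v by (simp add: Lab_def)
        then have "Lv P r M0 w v = 1" using w by simp
        then have "v = w" using Lv_one[OF M0(1,2) w(1) v(1)] by simp
        have ne: "v \<noteq> z" "z \<noteq> r" using z by (auto simp: lt_def)
        have "Lab P r M0 v z r = M0 z + 1" using rP ne v by (simp add: Lab_def)
        moreover have "Lv P r M0 w r = M0 v + 1" using rP v \<open>v = w\<close> by (simp add: Lv_def)
        ultimately have "M0 z = M0 v" using w by simp
        then show False using mono[OF v(1) z(1) z(2)] by simp
      qed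
      have "card ?S = ?n + 1" using notin cardLv[OF M0T] finite_imageI[OF F(1), of "Lv P r M0"] by (simp add: card_insert_disjoint)
      moreover have "card ?S \<le> fib M0" unfolding fib_def using Sf finX by (intro card_mono) auto
      ultimately show False using all M0T by auto
    qed
  next
    assume star: "\<forall>v\<in>P. v \<noteq> r \<longrightarrow> covers P le v r"
    have cond: "M v < M z" if "v \<in> P" "z \<in> P" "lt le v z" "z \<noteq> r" for M v z
    proof -
      have "v \<noteq> r" using that root[of z] rP by (auto simp: lt_def dest: F(3))
      then have "covers P le v r" using star that by auto
      moreover have "lt le z r" using lt_r that by auto
      ultimately show ?thesis using that by (auto simp: covers_def)
    qed
    have geq: "?n \<le> fib M" if "M \<in> ?T" for M
      using fib_ge[OF that] cond cardLv[OF that] by auto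
    have "sum (\<lambda>_. ?n) ?T = sum fib ?T" using sumfib NT by simp
    then show "\<forall>M\<in>?T. fib M = ?n"
      using sum_mono_inv[of "\<lambda>_. ?n" ?T fib] geq finT by auto
  qed
  then show ?thesis using ge eqiff by simp
qed

end

theorem mainTheorem5:
  fixes P :: "'a set" and le :: "'a \<Rightarrow> 'a \<Rightarrow> bool" and n :: nat
  assumes "rooted_tree_poset P le"
    and "card P = n"
  shows "deg (labelings P) (promotion P le) \<ge> real n \<and>
         (deg (labelings P) (promotion P le) = real n \<longleftrightarrow> rooted_star_poset P le)"
proof -
  obtain r where r: "r \<in> P" "\<forall>x\<in>P. le x r" using tree_root[OF assms(1)] by blast
  have fp: "finite_poset P le" using assms(1) by (simp add: rooted_tree_poset_def)
  interpret rtp P le r using fp r by unfold_locales auto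
  have star: "rooted_star_poset P le \<longleftrightarrow> (\<forall>v\<in>P. v \<noteq> r \<longrightarrow> covers P le v r)"
  proof
    assume "rooted_star_poset P le"
    then obtain r' where r': "r' \<in> P" "\<forall>x\<in>P. x \<noteq> r' \<longrightarrow> covers P le x r'"
      by (auto simp: rooted_star_poset_def)
    have "r' = r"
    proof (rule ccontr)
      assume ne: "r' \<noteq> r"
      then have "covers P le r r'" using r' r by auto
      then have "lt le r r'" by (simp add: covers_def)
      then show False using lt_asym[OF rP r'(1)] lt_r[OF r'(1) ne] by blast
    qed
    then show "\<forall>v\<in>P. v \<noteq> r \<longrightarrow> covers P le v r" using r' by simp
  next
    assume "\<forall>v\<in>P. v \<noteq> r \<longrightarrow> covers P le v r"
    then show "rooted_star_poset P le" using assms(1) r by (auto simp: rooted_star_poset_def)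
  qed
  show ?thesis using loc_main star assms(2) by simp
qed

end
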